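(* For every $\mathsf{C\text{-}RASP}_+$ program of size $n$, depth $d$, precision $p$ and girth $g$, there is an equivalent $\mathsf{TL}[\Diamond^{-}]$ program of size $O(n\,2^{\mathrm{poly}(p,g,d)})$.
   Context: $\mathsf{C\text{-}RASP}_+$ formulas over a finite alphabet $\Sigma$: $\phi ::= \sigma \mid \neg\phi \mid \phi_1\wedge\phi_2 \mid \sum_{t\in\mathcal T}\alpha_t t\sim k$, terms $t ::= \#[\phi] \mid c$, with $\sigma\in\Sigma$, $\alpha_t,k,c\in\mathbb{N}$, ${\sim}\in\{\ge,>,=,<,\le\}$; $\#[\phi]$ evaluates at $(w,i)$ to $|\{j\in[1,i]: w,j\models\phi\}|$, $c$ to $c$, comparisons are integer comparisons, $w,i\models\sigma$ iff $w_i=\sigma$. $\mathsf{TL}[\Diamond^{-}]$ formulas: $\phi ::= \sigma \mid \neg\phi \mid \phi_1\wedge\phi_2 \mid \Diamond^{-}\phi \mid \Box^{-}\phi$, where $w,i\models\Diamond^{-}\phi$ iff $w,j\models\phi$ for some $j<i$, and $w,i\models\Box^{-}\phi$ iff $w,j\models\phi$ for all $j\le i$. In both logics $w\models\phi$ iff $w,|w|\models\phi$, and equivalent means defining the same language. Programs are straight-line (DAG) representations $(\phi_1,\dots,\phi_m)$ where $\phi_i$ may refer to earlier $\phi_j$; size is the total number of symbols with constants in binary and each reference counted as 1. Depth: $\mathrm{dp}(\sigma)=\mathrm{dp}(c)=0$, $\neg$ preserves depth, $\wedge$ takes the maximum, $\mathrm{dp}(\#[\phi])=\mathrm{dp}(\phi)+1$,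 comparisons take the maximal depth of their terms; a program's depth is the maximum over its lines. Precision is the number of bits needed to encode the largest constant; girth is the maximum number of summands in any sum. *)

theory Defs
  imports Main
begin

fun nbits :: "nat \<Rightarrow> nat" where
  "nbits n = (if n \<le> 1 then 1 else Suc (nbits (n div 2)))"

section \<open>C-RASP+ : syntax with line references (straight-line programs)\<close>

datatype cmp = CGe | CGt | CEq | CLt | CLe

fun cmp_sem :: "cmp \<Rightarrow> nat \<Rightarrow> nat \<Rightarrow> bool" where
  "cmp_sem CGe x k = (x \<ge> k)"
| "cmp_sem CGt x k = (x > k)"
| "cmp_sem CEq x k = (x = k)"
| "cmp_sem CLt x k = (x < k)"
| "cmp_sem CLe x k = (x \<le> k)"

text \<open>A sum is a list of summands (coefficient, term), represented as its own type;
  CRef j refers to program line j.\<close>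
datatype 'a cform = CSym 'a | CNeg "'a cform" | CAnd "'a cform" "'a cform"
  | CCmp "'a csum" cmp nat | CRef nat
and 'a csum = SNil | SCons nat "'a cterm" "'a csum"
and 'a cterm = Count "'a cform" | CConst nat

text \<open>Semantics at position i (1-based) of word w; env j i = value of line j at position i.\<close>
primrec csem :: "(nat \<Rightarrow> nat \<Rightarrow> bool) \<Rightarrow> 'a list \<Rightarrow> 'a cform \<Rightarrow> nat \<Rightarrow> bool"
and cssem :: "(nat \<Rightarrow> nat \<Rightarrow> bool) \<Rightarrow> 'a list \<Rightarrow> 'a csum \<Rightarrow> nat \<Rightarrow> nat"
and ctsem :: "(nat \<Rightarrow> nat \<Rightarrow> bool) \<Rightarrow> 'a list \<Rightarrow> 'a cterm \<Rightarrow> nat \<Rightarrow> nat" where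
  "csem env w (CSym a) i = (1 \<le> i \<and> i \<le> length w \<and> w ! (i - 1) = a)"
| "csem env w (CNeg f) i = (\<not> csem env w f i)"
| "csem env w (CAnd f g) i = (csem env w f i \<and> csem env w g i)"
| "csem env w (CCmp s r k) i = cmp_sem r (cssem env w s i) k"
| "csem env w (CRef j) i = env j i"
| "cssem env w SNil i = 0"
| "cssem env w (SCons a t s) i = a * ctsem env w t i + cssem env w s i"
| "ctsem env w (Count f) i = card {j \<in> {1..i}. csem env w f j}"
| "ctsem env w (CConst c) i = c"

definition cenvs :: "'a cform list \<Rightarrow> 'a list \<Rightarrow> (nat \<Rightarrow> bool) list" where
  "cenvs P w = foldl (\<lambda>E f. E @ [csem (\<lambda>j. if j < length E then E ! j else (\<lambda>_. False)) w f]) [] P"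

definition clang :: "'a cform list \<Rightarrow> 'a list set" where
  "clang P = {w. P \<noteq> [] \<and> last (cenvs P w) (length w)}"

primrec crefs :: "'a cform \<Rightarrow> nat set" and csrefs :: "'a csum \<Rightarrow> nat set"
  and ctrefs :: "'a cterm \<Rightarrow> nat set" where
  "crefs (CSym a) = {}"
| "crefs (CNeg f) = crefs f"
| "crefs (CAnd f g) = crefs f \<union> crefs g"
| "crefs (CCmp s r k) = csrefs s"
| "crefs (CRef j) = {j}"
| "csrefs SNil = {}"
| "csrefs (SCons a t s) = ctrefs t \<union> csrefs s"
| "ctrefs (Count f) = crefs f"
| "ctrefs (CConst c) = {}"

definition cwf :: "'a cform list \<Rightarrow> bool" where
  "cwf P = (P \<noteq> [] \<and> (\<forall>i < length P. crefs (P ! i) \<subseteq> {..<i}))"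

primrec csize :: "'a cform \<Rightarrow> nat" and cssize :: "'a csum \<Rightarrow> nat"
  and ctsize :: "'a cterm \<Rightarrow> nat" where
  "csize (CSym a) = 1"
| "csize (CNeg f) = Suc (csize f)"
| "csize (CAnd f g) = Suc (csize f + csize g)"
| "csize (CCmp s r k) = cssize s + 1 + nbits k"
| "csize (CRef j) = 1"
| "cssize SNil = 0"
| "cssize (SCons a t s) = nbits a + ctsize t + 1 + cssize s"
| "ctsize (Count f) = Suc (csize f)"
| "ctsize (CConst c) = nbits c"

definition cprog_size :: "'a cform list \<Rightarrow> nat" where
  "cprog_size P = sum_list (map csize P)"

primrec cdepth :: "(nat \<Rightarrow> nat) \<Rightarrow> 'a cform \<Rightarrow> nat"
  and csdepth :: "(nat \<Rightarrow> nat) \<Rightarrow> 'a csum \<Rightarrow> nat"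
  and ctdepth :: "(nat \<Rightarrow> nat) \<Rightarrow> 'a cterm \<Rightarrow> nat" where
  "cdepth de (CSym a) = 0"
| "cdepth de (CNeg f) = cdepth de f"
| "cdepth de (CAnd f g) = max (cdepth de f) (cdepth de g)"
| "cdepth de (CCmp s r k) = csdepth de s"
| "cdepth de (CRef j) = de j"
| "csdepth de SNil = 0"
| "csdepth de (SCons a t s) = max (ctdepth de t) (csdepth de s)"
| "ctdepth de (Count f) = Suc (cdepth de f)"
| "ctdepth de (CConst c) = 0"

definition cdepths :: "'a cform list \<Rightarrow> nat list" where
  "cdepths P = foldl (\<lambda>D f. D @ [cdepth (\<lambda>j. if j < length D then D ! j else 0) f]) [] P"

definition cprog_depth :: "'a cform list \<Rightarrow> nat" where
  "cprog_depth P = Max (set (0 # cdepths P))"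

primrec cprec :: "'a cform \<Rightarrow> nat" and csprec :: "'a csum \<Rightarrow> nat"
  and ctprec :: "'a cterm \<Rightarrow> nat" where
  "cprec (CSym a) = 0"
| "cprec (CNeg f) = cprec f"
| "cprec (CAnd f g) = max (cprec f) (cprec g)"
| "cprec (CCmp s r k) = max (nbits k) (csprec s)"
| "cprec (CRef j) = 0"
| "csprec SNil = 0"
| "csprec (SCons a t s) = max (nbits a) (max (ctprec t) (csprec s))"
| "ctprec (Count f) = cprec f"
| "ctprec (CConst c) = nbits c"

definition cprog_prec :: "'a cform list \<Rightarrow> nat" where
  "cprog_prec P = Max (set (0 # map cprec P))"

primrec cslen :: "'a csum \<Rightarrow> nat" where
  "cslen SNil = 0"
| "cslen (SCons a t s) = Suc (cslen s)"

primrec cgirth :: "'a cform \<Rightarrow> nat" and csgirth :: "'a csum \<Rightarrow> nat"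
  and ctgirth :: "'a cterm \<Rightarrow> nat" where
  "cgirth (CSym a) = 0"
| "cgirth (CNeg f) = cgirth f"
| "cgirth (CAnd f g) = max (cgirth f) (cgirth g)"
| "cgirth (CCmp s r k) = max (cslen s) (csgirth s)"
| "cgirth (CRef j) = 0"
| "csgirth SNil = 0"
| "csgirth (SCons a t s) = max (ctgirth t) (csgirth s)"
| "ctgirth (Count f) = cgirth f"
| "ctgirth (CConst c) = 0"

definition cprog_girth :: "'a cform list \<Rightarrow> nat" where
  "cprog_girth P = Max (set (0 # map cgirth P))"

section \<open>TL[past diamond] programs\<close>

datatype 'a tform = TSym 'a | TNeg "'a tform" | TAnd "'a tform" "'a tform"
  | TDia "'a tform" | TBox "'a tform" | TRef nat

fun tsem :: "(nat \<Rightarrow> nat \<Rightarrow> bool) \<Rightarrow> 'a list \<Rightarrow> 'a tform \<Rightarrow> nat \<Rightarrow> bool" where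
  "tsem env w (TSym a) i = (1 \<le> i \<and> i \<le> length w \<and> w ! (i - 1) = a)"
| "tsem env w (TNeg f) i = (\<not> tsem env w f i)"
| "tsem env w (TAnd f g) i = (tsem env w f i \<and> tsem env w g i)"
| "tsem env w (TDia f) i = (\<exists>j. 1 \<le> j \<and> j < i \<and> tsem env w f j)"
| "tsem env w (TBox f) i = (\<forall>j. 1 \<le> j \<and> j \<le> i \<longrightarrow> tsem env w f j)"
| "tsem env w (TRef j) i = env j i"

definition tenvs :: "'a tform list \<Rightarrow> 'a list \<Rightarrow> (nat \<Rightarrow> bool) list" where
  "tenvs P w = foldl (\<lambda>E f. E @ [tsem (\<lambda>j. if j < length E then E ! j else (\<lambda>_. False)) w f]) [] P"

definition tlang :: "'a tform list \<Rightarrow> 'a list set" where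
  "tlang P = {w. P \<noteq> [] \<and> last (tenvs P w) (length w)}"

fun trefs :: "'a tform \<Rightarrow> nat set" where
  "trefs (TSym a) = {}"
| "trefs (TNeg f) = trefs f"
| "trefs (TAnd f g) = trefs f \<union> trefs g"
| "trefs (TDia f) = trefs f"
| "trefs (TBox f) = trefs f"
| "trefs (TRef j) = {j}"

definition twf :: "'a tform list \<Rightarrow> bool" where
  "twf P = (P \<noteq> [] \<and> (\<forall>i < length P. trefs (P ! i) \<subseteq> {..<i}))"

fun tsize :: "'a tform \<Rightarrow> nat" where
  "tsize (TSym a) = 1"
| "tsize (TNeg f) = Suc (tsize f)"
| "tsize (TAnd f g) = Suc (tsize f + tsize g)"
| "tsize (TDia f) = Suc (tsize f)"
| "tsize (TBox f) = Suc (tsize f)"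
| "tsize (TRef j) = 1"

definition tprog_size :: "'a tform list \<Rightarrow> nat" where
  "tprog_size P = sum_list (map tsize P)"

end

theory Submission
  imports Defs
begin

definition tt :: "'a tform" where
  "tt = TNeg (TAnd (TSym undefined) (TNeg (TSym undefined)))"
definition ff :: "'a tform" where
  "ff = TNeg tt"
definition tor :: "'a tform \<Rightarrow> 'a tform \<Rightarrow> 'a tform" where
  "tor a b = TNeg (TAnd (TNeg a) (TNeg b))"
fun tors :: "'a tform list \<Rightarrow> 'a tform" where
  "tors [] = ff"
| "tors (x # xs) = tor x (tors xs)"
fun strict :: "'a tform \<Rightarrow> nat \<Rightarrow> 'a tform" where
  "strict f 0 = tt"
| "strict f (Suc m) = TDia (TAnd f (strict f m))"
fun geq :: "'a tform \<Rightarrow> nat \<Rightarrow> 'a tform" where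
  "geq f 0 = tt"
| "geq f (Suc m) = TNeg (TBox (TNeg (TAnd f (strict f m))))"

primrec tr :: "'a cform \<Rightarrow> 'a tform"
  and trs :: "'a csum \<Rightarrow> nat \<Rightarrow> (nat \<Rightarrow> bool) \<Rightarrow> 'a tform"
  and trt :: "'a cterm \<Rightarrow> nat \<Rightarrow> 'a tform" where
  "tr (CSym a) = TSym a"
| "tr (CNeg f) = TNeg (tr f)"
| "tr (CAnd f g) = TAnd (tr f) (tr g)"
| "tr (CCmp s r K) = trs s K (\<lambda>x. cmp_sem r x K)"
| "tr (CRef j) = TRef j"
| "trs SNil K R = (if R 0 then tt else ff)"
| "trs (SCons a t s) K R = tors (map (\<lambda>v. TAnd
      (if v = Suc K then trt t v else TAnd (trt t v) (TNeg (trt t (Suc v))))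
      (trs s K (\<lambda>x. R (a * v + x)))) [0..<K+2])"
| "trt (Count f) m = geq (tr f) m"
| "trt (CConst c) m = (if m \<le> c then tt else ff)"

primrec capsum :: "(nat \<Rightarrow> nat \<Rightarrow> bool) \<Rightarrow> 'a list \<Rightarrow> nat \<Rightarrow> 'a csum \<Rightarrow> nat \<Rightarrow> nat" where
  "capsum env w K SNil i = 0"
| "capsum env w K (SCons a t s) i = a * min (ctsem env w t i) (Suc K) + capsum env w K s i"

lemma tt_sem[simp]: "tsem env w tt i" by (simp add: tt_def)
lemma ff_sem[simp]: "\<not> tsem env w ff i" by (simp add: ff_def)
lemma tors_sem: "tsem env w (tors xs) i = (\<exists>x\<in>set xs. tsem env w x i)"
  by (induction xs) (auto simp: tor_def)

lemma tors_map_sem: "tsem env w (tors (map F xs)) i = (\<exists>x\<in>set xs. tsem env w (F x) i)"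
  by (induction xs) (auto simp: tor_def)

lemma cnt_step:
  fixes i :: nat
  shows "(\<exists>j. 1 \<le> j \<and> j \<le> i \<and> P j \<and> m \<le> card {k \<in> {1..j-1}. P k})
   = (Suc m \<le> card {k \<in> {1..i}. P k})"
proof (induction i)
  case 0
  then show ?case by auto
next
  case (Suc i)
  have e: "{k \<in> {1..Suc i}. P k} = {k \<in> {1..i}. P k} \<union> (if P (Suc i) then {Suc i} else {})"
    by (auto simp: le_Suc_eq)
  have c: "card {k \<in> {1..Suc i}. P k} = card {k \<in> {1..i}. P k} + (if P (Suc i) then 1 else 0)"
    unfolding e by auto
  have "(\<exists>j. 1 \<le> j \<and> j \<le> Suc i \<and> P j \<and> m \<le> card {k \<in> {1..j-1}. P k})
     = ((\<exists>j. 1 \<le> j \<and> j \<le> i \<and> P j \<and> m \<le> card {k \<in> {1..j-1}. P k})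
        \<or> (P (Suc i) \<and> m \<le> card {k \<in> {1..i}. P k}))"
    by (auto simp: le_Suc_eq)
  then show ?case using Suc c by auto
qed

lemma strict_sem:
  assumes "\<And>j. tsem env w f j = P j"
  shows "tsem env w (strict f m) i = (m \<le> card {k \<in> {1..i-1}. P k})"
proof (induction m arbitrary: i)
  case 0 then show ?case by simp
next
  case (Suc m)
  have "tsem env w (strict f (Suc m)) i =
     (\<exists>j. 1 \<le> j \<and> j \<le> i - 1 \<and> P j \<and> m \<le> card {k \<in> {1..j-1}. P k})"
    using Suc assms by auto
  then show ?case using cnt_step[of "i-1" P m] by simp
qed

lemma geq_sem:
  assumes "\<And>j. tsem env w f j = P j"
  shows "tsem env w (geq f m) i = (m \<le> card {k \<in> {1..i}. P k})"
proof (cases m)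
  case 0 then show ?thesis by simp
next
  case (Suc m')
  have "tsem env w (geq f m) i =
     (\<exists>j. 1 \<le> j \<and> j \<le> i \<and> P j \<and> m' \<le> card {k \<in> {1..j-1}. P k})"
    using Suc assms strict_sem[OF assms] by auto
  then show ?thesis using cnt_step[of i P m'] Suc by simp
qed

lemma capsum_cmp0:
  "capsum env w K s i \<le> cssem env w s i \<and>
   (capsum env w K s i = cssem env w s i \<or> K < capsum env w K s i)"
proof (induction s rule: csum.induct[where ?P1.0="\<lambda>_. True" and ?P3.0="\<lambda>_. True"])
  case SNil then show ?case by simp
next
  case (SCons a t s)
  let ?c = "ctsem env w t i"
  have m1: "a * min ?c (Suc K) \<le> a * ?c" by simp
  have m2: "a * min ?c (Suc K) = a * ?c \<or> K < a * min ?c (Suc K)"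
  proof (cases "?c \<le> Suc K \<or> a = 0")
    case True then show ?thesis by auto
  next
    case False
    then have "a * min ?c (Suc K) = a * Suc K" by simp
    also have "\<dots> \<ge> Suc K" using False by (cases a) auto
    finally have "Suc K \<le> a * min ?c (Suc K)" .
    then show ?thesis by (intro disjI2) linarith
  qed
  have m3: "a * min ?c (Suc K) + capsum env w K s i \<le> a * ?c + cssem env w s i"
    using m1 SCons by (simp add: add_mono)
  show ?case using SCons m2 m3 by auto
qed auto

lemmas capsum_cmp = capsum_cmp0

lemma cmp_cap: "cmp_sem r (capsum env w K s i) K = cmp_sem r (cssem env w s i) K"
proof -
  from capsum_cmp[of env w K s i] show ?thesis
    by (cases r) auto
qed

lemma eqlem: "((v::nat) \<le> c \<and> \<not> Suc v \<le> c \<and> X) = (v = c \<and> X)" by auto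

lemma sem_all:
  "tsem env w (tr f) i = csem env w f i"
  "\<And>K R. tsem env w (trs s K R) i = R (capsum env w K s i)"
  "\<And>m. tsem env w (trt t m) i = (m \<le> ctsem env w t i)"
proof (induction f and s and t arbitrary: i and i and i)
  case (CCmp s r K) then show ?case by (simp add: cmp_cap)
next
  case (SCons a t s)
  show ?case
  proof -
    let ?c = "ctsem env w t i"
    have "tsem env w (trs (SCons a t s) K R) i =
      (\<exists>v\<in>{0..<K+2}. (if v = Suc K then v \<le> ?c else v = ?c) \<and> R (a * v + capsum env w K s i))"
    proof -
      have "tsem env w (trs (SCons a t s) K R) i = (\<exists>v\<in>{0..<K+2}. tsem env w (TAnd
        (if v = Suc K then trt t v else TAnd (trt t v) (TNeg (trt t (Suc v))))
        (trs s K (\<lambda>x. R (a * v + x)))) i)"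
        by (simp only: trs.simps tors_map_sem set_upt)
      also have "\<dots> = (\<exists>v\<in>{0..<K+2}. (if v = Suc K then v \<le> ?c else v = ?c) \<and> R (a * v + capsum env w K s i))"
        apply (intro bex_cong refl)
        subgoal for v by (cases "v = Suc K") (simp_all add: SCons.IH eqlem)
        done
      finally show ?thesis .
    qed
    also have "\<dots> = R (a * min ?c (Suc K) + capsum env w K s i)"
    proof
      assume "\<exists>v\<in>{0..<K+2}. (if v = Suc K then v \<le> ?c else v = ?c) \<and> R (a * v + capsum env w K s i)"
      then obtain v where v1': "v \<in> {0..<K+2}" and v23: "(if v = Suc K then v \<le> ?c else v = ?c) \<and> R (a * v + capsum env w K s i)" ..
      have v1: "v < K+2" using v1' by simp
      have v2: "(if v = Suc K then v \<le> ?c else v = ?c)" using v23 by (rule conjunct1)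
      have v3: "R (a * v + capsum env w K s i)" using v23 by (rule conjunct2)
      have veq: "v = min ?c (Suc K)"
      proof (cases "v = Suc K")
        case True then show ?thesis using v2 by simp
      next
        case False then have "v = ?c" using v2 by simp
        then show ?thesis using v1 False by simp
      qed
      show "R (a * min ?c (Suc K) + capsum env w K s i)" using v3 unfolding veq .
    next
      assume hR: "R (a * min ?c (Suc K) + capsum env w K s i)"
      have hm: "min ?c (Suc K) \<in> {0..<K+2}" by simp
      have hif: "(if min ?c (Suc K) = Suc K then min ?c (Suc K) \<le> ?c else min ?c (Suc K) = ?c)"
        by (simp add: min_def)
      show "\<exists>v\<in>{0..<K+2}. (if v = Suc K then v \<le> ?c else v = ?c) \<and> R (a * v + capsum env w K s i)"
        apply (rule bexI[where x="min ?c (Suc K)"]) apply (rule conjI[OF hif hR]) by (rule hm)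
    qed
    finally show ?thesis by (simp only: capsum.simps)
  qed
next
  case (Count f) then show ?case using geq_sem[of env w "tr f" "csem env w f"] by simp
qed simp_all


lemma tenvs_snoc: "tenvs (Q @ [f]) w = tenvs Q w @ [tsem (\<lambda>j. if j < length (tenvs Q w) then tenvs Q w ! j else (\<lambda>_. False)) w f]"
  unfolding tenvs_def by (simp only: foldl_append foldl.simps)
lemma cenvs_snoc: "cenvs (P @ [f]) w = cenvs P w @ [csem (\<lambda>j. if j < length (cenvs P w) then cenvs P w ! j else (\<lambda>_. False)) w f]"
  unfolding cenvs_def by (simp only: foldl_append foldl.simps)

lemma tenvs_tr: "tenvs (map tr P) w = cenvs P w"
proof (induction P rule: rev_induct)
  case Nil then show ?case by (simp add: tenvs_def cenvs_def)
next
  case (snoc f P)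
  show ?case unfolding map_append list.map tenvs_snoc cenvs_snoc snoc sem_all(1) ..
qed

lemma tlang_tr: "tlang (map tr P) = clang P"
  by (simp add: tlang_def clang_def tenvs_tr)

lemma trefs_tt[simp]: "trefs tt = {}" by (simp add: tt_def)
lemma trefs_ff[simp]: "trefs ff = {}" by (simp add: ff_def)
lemma trefs_tors: "trefs (tors xs) = (\<Union>x\<in>set xs. trefs x)"
  by (induction xs) (auto simp: tor_def)
lemma trefs_strict: "trefs (strict f m) \<subseteq> trefs f"
  by (induction m) auto
lemma trefs_geq: "trefs (geq f m) \<subseteq> trefs f"
  using trefs_strict by (cases m) auto

lemma trefs_all:
  "trefs (tr (f::'a cform)) \<subseteq> crefs f"
  "\<And>K R. trefs (trs (s::'a csum) K R) \<subseteq> csrefs s"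
  "\<And>m. trefs (trt (t::'a cterm) m) \<subseteq> ctrefs t"
proof (induction f and s and t)
  case (SCons a t s)
  then show ?case by (fastforce simp: trefs_tors dest: SCons.IH(1)[THEN subsetD] SCons.IH(2)[THEN subsetD])
next
  case (Count f)
  then show ?case using trefs_geq[of "tr f" m] by auto
qed auto

lemma twf_tr: "cwf P \<Longrightarrow> twf (map tr P)"
  unfolding cwf_def twf_def using trefs_all(1) by fastforce


lemma nbits_lt: "n < 2 ^ nbits n"
proof (induction n rule: nbits.induct)
  case (1 n)
  show ?case
  proof (cases "n \<le> 1")
    case True then show ?thesis by simp
  next
    case False
    then have "n div 2 < 2 ^ nbits (n div 2)" using 1 by simp
    then have "n < 2 * 2 ^ nbits (n div 2)" by linarith
    then show ?thesis using False by simp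
  qed
qed

declare nbits.simps[simp del]

lemma tsize_tt[simp]: "tsize tt = 5" by (simp add: tt_def)
lemma tsize_ff[simp]: "tsize ff = 6" by (simp add: ff_def)

lemma tsize_tors_map:
  assumes "\<And>x. x \<in> set xs \<Longrightarrow> tsize (F x) + 4 \<le> B"
  shows "tsize (tors (map F xs)) \<le> length xs * B + 6"
  using assms
proof (induction xs)
  case Nil then show ?case by simp
next
  case (Cons a xs)
  have "tsize (F a) + 4 \<le> B" using Cons.prems by simp
  moreover have "tsize (tors (map F xs)) \<le> length xs * B + 6" using Cons by simp
  ultimately show ?case by (simp add: tor_def)
qed

lemma tsize_strict: "tsize (strict f m) = 5 + m * (tsize f + 2)"
  by (induction m) auto

lemma tsize_geq: "tsize (geq f m) \<le> (m + 1) * (tsize f + 9)"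
  by (cases m) (auto simp: tsize_strict algebra_simps)

definition zz :: "nat \<Rightarrow> nat \<Rightarrow> nat" where
  "zz p g = 2 ^ ((p + 2) * (g + 2) + 5)"

lemma zz_pos: "1 \<le> zz p g" by (simp add: zz_def)

lemma zz_mono: "a \<le> b \<Longrightarrow> zz p g ^ a \<le> zz p g ^ b"
  using zz_pos by (simp add: power_increasing)

lemma zz_pow_pos: "1 \<le> zz p g ^ a"
  using zz_pos by simp

lemma K_bound:
  assumes "K < 2 ^ p"
  shows "27 * (K + 3) ^ (g + 2) \<le> zz p g"
proof -
  have "K + 3 \<le> 2 ^ (p + 2)"
  proof -
    have "1 \<le> (2::nat) ^ p" by simp
    then show ?thesis using assms by simp
  qed
  then have "(K + 3) ^ (g + 2) \<le> (2 ^ (p + 2)) ^ (g + 2)" by (rule power_mono) simp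
  also have "\<dots> = 2 ^ ((p + 2) * (g + 2))" by (rule power_mult[symmetric])
  finally have "27 * (K + 3) ^ (g + 2) \<le> 32 * 2 ^ ((p + 2) * (g + 2))" by simp
  also have "\<dots> = zz p g"
  proof -
    have e: "\<And>e. 32 * (2::nat) ^ e = 2 ^ (e + 5)" by (simp add: power_add)
    show ?thesis unfolding zz_def by (rule e)
  qed
  finally show ?thesis .
qed

lemma scons_arith:
  fixes K Q X :: nat
  assumes "K + 3 \<le> X" "6 \<le> Q" "T \<le> (K + 2) * (Q + X * Q) + 6"
  shows "T \<le> (K + 3) * X * Q"
proof -
  have "(K + 2) * Q + 6 \<le> (K + 3) * Q" using assms(2) by (simp add: algebra_simps)
  also have "\<dots> \<le> X * Q" using assms(1) by (simp add: mult_right_mono)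
  finally have h: "(K + 2) * Q + 6 \<le> X * Q" .
  have "T \<le> (K + 2) * Q + 6 + (K + 2) * (X * Q)" using assms(3) by (simp add: algebra_simps)
  also have "\<dots> \<le> X * Q + (K + 2) * (X * Q)" using h by simp
  also have "\<dots> = (K + 3) * X * Q" by (simp add: algebra_simps)
  finally show ?thesis .
qed


lemma q_arith:
  fixes A W K :: nat
  assumes "A \<le> W" "1 \<le> W"
  shows "2 * (K + 3) * (A + 9) + 20 \<le> 27 * (K + 3) * W"
proof -
  have a: "2 * (K + 3) * (A + 9) \<le> 2 * (K + 3) * (10 * W)" using assms by (intro mult_le_mono2) linarith
  have b1: "7 * (K + 3) * 1 \<le> 7 * (K + 3) * W" using assms(2) by (rule mult_le_mono2)
  have b0: "21 \<le> 7 * (K + 3) * 1" by simp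
  have b: "21 \<le> 7 * (K + 3) * W" using le_trans[OF b0 b1] .
  have e: "2 * (K + 3) * (10 * W) = 20 * ((K + 3) * W)" "7 * (K + 3) * W = 7 * ((K + 3) * W)"
    "27 * (K + 3) * W = 27 * ((K + 3) * W)" by simp_all
  show ?thesis using a b unfolding e by linarith
qed

lemma snil_bound: "tsize (trs SNil K R) \<le> (K + 3) ^ (cslen SNil + 1) *
        (2 * (K + 3) * (cssize SNil * zz p g ^ csdepth (\<lambda>_. 0) SNil + 9) + 20)"
proof -
  have t: "tsize (trs SNil K R) \<le> 6" by simp
  have a: "1 * 20 \<le> (K + 3) ^ (cslen SNil + 1) *
        (2 * (K + 3) * (cssize SNil * zz p g ^ csdepth (\<lambda>_. 0) SNil + 9) + 20)"
    by (intro mult_le_mono) simp_all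
  have b: "(6::nat) \<le> 1 * 20" by simp
  show ?thesis by (rule le_trans[OF t le_trans[OF b a]])
qed

lemma count_step:
  assumes "tsize (tr f) \<le> csize f * zz p g ^ (cdepth (\<lambda>_. 0) f + 1)"
  shows "tsize (trt (Count f) m) \<le> (m + 1) * (ctsize (Count f) * zz p g ^ ctdepth (\<lambda>_. 0) (Count f) + 9)"
proof -
  let ?Z = "zz p g"
  let ?d = "cdepth (\<lambda>_. 0) f"
  have "tsize (trt (Count f) m) \<le> (m + 1) * (tsize (tr f) + 9)" using tsize_geq[of "tr f" m] by (simp only: trt.simps)
  also have "\<dots> \<le> (m + 1) * (csize f * ?Z ^ (?d + 1) + 9)"
    using assms by (intro mult_le_mono2) simp
  also have "\<dots> \<le> (m + 1) * (Suc (csize f) * ?Z ^ (?d + 1) + 9)"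
    by (intro mult_le_mono2) simp
  finally show ?thesis by simp
qed

lemma size_all:
  fixes p g :: nat
  shows
  "cprec (f::'a cform) \<le> p \<Longrightarrow> cgirth f \<le> g \<Longrightarrow>
     tsize (tr f) \<le> csize f * zz p g ^ (cdepth (\<lambda>_. 0) f + 1)"
  "\<And>K R. csprec (s::'a csum) \<le> p \<Longrightarrow> csgirth s \<le> g \<Longrightarrow> K < 2 ^ p \<Longrightarrow>
     tsize (trs s K R) \<le> (K + 3) ^ (cslen s + 1) *
        (2 * (K + 3) * (cssize s * zz p g ^ csdepth (\<lambda>_. 0) s + 9) + 20)"
  "\<And>m. ctprec (t::'a cterm) \<le> p \<Longrightarrow> ctgirth t \<le> g \<Longrightarrow>
     tsize (trt t m) \<le> (m + 1) * (ctsize t * zz p g ^ ctdepth (\<lambda>_. 0) t + 9)"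
proof (induction f and s and t)
  case (CSym x)
  then show ?case using zz_pos[of p g] by simp
next
  case (CRef x)
  then show ?case using zz_pos[of p g] by simp
next
  case (CNeg f)
  let ?X = "zz p g ^ (cdepth (\<lambda>_. 0) f + 1)"
  have "tsize (tr f) \<le> csize f * ?X" using CNeg by simp
  moreover have "1 \<le> ?X" by (rule zz_pow_pos)
  ultimately have "Suc (tsize (tr f)) \<le> ?X + csize f * ?X" by linarith
  then show ?case by (simp only: tr.simps tsize.simps csize.simps cdepth.simps mult_Suc)
next
  case (CAnd f1 f2)
  let ?D = "cdepth (\<lambda>_. 0) (CAnd f1 f2) + 1"
  have "tsize (tr f1) \<le> csize f1 * zz p g ^ (cdepth (\<lambda>_. 0) f1 + 1)" using CAnd by simp
  also have "\<dots> \<le> csize f1 * zz p g ^ ?D" by (intro mult_le_mono2 zz_mono) simp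
  finally have h1: "tsize (tr f1) \<le> csize f1 * zz p g ^ ?D" .
  have "tsize (tr f2) \<le> csize f2 * zz p g ^ (cdepth (\<lambda>_. 0) f2 + 1)" using CAnd by simp
  also have "\<dots> \<le> csize f2 * zz p g ^ ?D" by (intro mult_le_mono2 zz_mono) simp
  finally have h2: "tsize (tr f2) \<le> csize f2 * zz p g ^ ?D" .
  have "1 \<le> zz p g ^ ?D" by (rule zz_pow_pos)
  with h1 h2 have "Suc (tsize (tr f1) + tsize (tr f2)) \<le> zz p g ^ ?D + (csize f1 * zz p g ^ ?D + csize f2 * zz p g ^ ?D)"
    by linarith
  then show ?case by (simp only: tr.simps tsize.simps csize.simps mult_Suc add_mult_distrib)
next
  case (CCmp s r K)
  let ?Z = "zz p g"
  let ?d = "csdepth (\<lambda>_. 0) s"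
  let ?N = "cssize s + 1 + nbits K"
  let ?W = "?N * ?Z ^ ?d"
  have Kp: "K < 2 ^ p"
  proof -
    have "nbits K \<le> p" using CCmp.prems by simp
    then have "(2::nat) ^ nbits K \<le> 2 ^ p" by (simp add: power_increasing)
    then show ?thesis using nbits_lt[of K] by linarith
  qed
  have ng: "cslen s \<le> g" using CCmp.prems by simp
  have T: "tsize (tr (CCmp s r K)) \<le> (K + 3) ^ (cslen s + 1) *
        (2 * (K + 3) * (cssize s * ?Z ^ ?d + 9) + 20)"
    using CCmp Kp by simp
  have W1: "1 \<le> ?W" using zz_pow_pos[of p g ?d] by simp
  have "cssize s * ?Z ^ ?d \<le> ?W" by (intro mult_le_mono1) simp
  then have Q: "2 * (K + 3) * (cssize s * ?Z ^ ?d + 9) + 20 \<le> 27 * (K + 3) * ?W"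
    using W1 by (rule q_arith)
  have P: "(K + 3) ^ (cslen s + 1) \<le> (K + 3) ^ (g + 1)"
    using ng by (intro power_increasing) simp_all
  have "tsize (tr (CCmp s r K)) \<le> (K + 3) ^ (g + 1) * (27 * (K + 3) * ?W)"
    using T P Q by (meson le_trans mult_le_mono)
  also have "\<dots> = (27 * (K + 3) ^ (g + 2)) * ?W" by (simp add: algebra_simps)
  also have "\<dots> \<le> ?Z * ?W" using K_bound[OF Kp, of g] by (intro mult_le_mono1)
  also have "\<dots> = ?N * ?Z ^ (?d + 1)" by (simp add: algebra_simps)
  finally show ?case by simp
next
  case SNil
  show ?case by (rule snil_bound)
next
  case (SCons a t s)
  let ?Z = "zz p g"
  let ?V = "cssize (SCons a t s) * ?Z ^ csdepth (\<lambda>_. 0) (SCons a t s)"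
  let ?Q = "2 * (K + 3) * (?V + 9) + 20"
  let ?X = "(K + 3) ^ (cslen s + 1)"
  have tV: "ctsize t * ?Z ^ ctdepth (\<lambda>_. 0) t \<le> ?V"
    by (intro mult_le_mono zz_mono) simp_all
  have sV: "cssize s * ?Z ^ csdepth (\<lambda>_. 0) s \<le> ?V"
    by (intro mult_le_mono zz_mono) simp_all
  have ht: "tsize (trt t v) \<le> (K + 3) * (?V + 9)" if "v \<le> K + 2" for v
  proof -
    have "tsize (trt t v) \<le> (v + 1) * (ctsize t * ?Z ^ ctdepth (\<lambda>_. 0) t + 9)"
      using SCons.IH(1) SCons.prems by simp
    also have "\<dots> \<le> (K + 3) * (?V + 9)" using that tV by (intro mult_le_mono) simp_all
    finally show ?thesis .
  qed
  have hs: "tsize (trs s K R') \<le> ?X * ?Q" for R'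
  proof -
    have "tsize (trs s K R') \<le> ?X * (2 * (K + 3) * (cssize s * ?Z ^ csdepth (\<lambda>_. 0) s + 9) + 20)"
      using SCons.IH(2) SCons.prems by simp
    also have "\<dots> \<le> ?X * ?Q" using sV by (intro mult_le_mono2) simp
    finally show ?thesis .
  qed
  have item: "tsize (TAnd (if v = Suc K then trt t v else TAnd (trt t v) (TNeg (trt t (Suc v))))
      (trs s K (\<lambda>x. R (a * v + x)))) + 4 \<le> ?Q + ?X * ?Q" if "v \<in> set [0..<K+2]" for v
  proof -
    have v: "v < K + 2" using that unfolding set_upt atLeastLessThan_iff by (rule conjunct2)
    let ?Y = "(K + 3) * (?V + 9)"
    have hif: "tsize (if v = Suc K then trt t v else TAnd (trt t v) (TNeg (trt t (Suc v))))
       \<le> 2 * ?Y + 2"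
    proof (cases "v = Suc K")
      case True then show ?thesis using ht[of v] v by simp
    next
      case False
      have "tsize (trt t v) \<le> ?Y" "tsize (trt t (Suc v)) \<le> ?Y" using ht[of v] ht[of "Suc v"] v by simp_all
      then show ?thesis using False by simp
    qed
    have eq: "?Q = 2 * ?Y + 20" by simp
    have hs': "tsize (trs s K (\<lambda>x. R (a * v + x))) \<le> ?X * ?Q" by (rule hs)
    show ?thesis using hif hs' unfolding eq tsize.simps by linarith
  qed
  have T: "tsize (trs (SCons a t s) K R) \<le> (K + 2) * (?Q + ?X * ?Q) + 6"
    using tsize_tors_map[where xs="[0..<K+2]", OF item] by (simp only: trs.simps length_upt diff_zero)
  have X: "K + 3 \<le> ?X"
  proof -
    have "(K + 3) ^ 1 \<le> ?X" by (intro power_increasing) simp_all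
    then show ?thesis by simp
  qed
  have "tsize (trs (SCons a t s) K R) \<le> (K + 3) * ?X * ?Q"
    by (rule scons_arith[OF X _ T]) simp
  then show ?case by simp
next
  case (Count f)
  have "cprec f \<le> p" "cgirth f \<le> g" using Count.prems by simp_all
  then show ?case using Count.IH by (intro count_step)
next
  case (CConst c)
  show ?case by simp
qed


lemma cdepth0_le:
  "cdepth (\<lambda>_. 0) (f::'a cform) \<le> cdepth de f"
  "csdepth (\<lambda>_. 0) (s::'a csum) \<le> csdepth de s"
  "ctdepth (\<lambda>_. 0) (t::'a cterm) \<le> ctdepth de t"
  by (induction f and s and t) (auto simp: le_max_iff_disj)

lemma cdepths_snoc: "cdepths (P @ [f]) = cdepths P @ [cdepth (\<lambda>j. if j < length (cdepths P) then cdepths P ! j else 0) f]"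
  unfolding cdepths_def by (simp only: foldl_append foldl.simps)

lemma cdepths_mem: "x \<in> set P \<Longrightarrow> \<exists>de. cdepth de x \<in> set (cdepths P)"
proof (induction P rule: rev_induct)
  case Nil then show ?case by simp
next
  case (snoc f P)
  show ?case
  proof (cases "x = f")
    case True then show ?thesis by (auto simp: cdepths_snoc)
  next
    case False
    then have "x \<in> set P" using snoc.prems by simp
    then obtain de where "cdepth de x \<in> set (cdepths P)" using snoc.IH by blast
    then show ?thesis by (auto simp: cdepths_snoc)
  qed
qed

lemma depth_le: "x \<in> set P \<Longrightarrow> cdepth (\<lambda>_. 0) x \<le> cprog_depth P"
proof -
  assume "x \<in> set P"
  then obtain de where de: "cdepth de x \<in> set (cdepths P)" using cdepths_mem by blast
  have "cdepth (\<lambda>_. 0) x \<le> cdepth de x" by (rule cdepth0_le(1))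
  also have "\<dots> \<le> cprog_depth P" unfolding cprog_depth_def using de by (intro Max_ge) auto
  finally show ?thesis .
qed

lemma prec_le: "x \<in> set P \<Longrightarrow> cprec x \<le> cprog_prec P"
  unfolding cprog_prec_def by (intro Max_ge) auto

lemma girth_le: "x \<in> set P \<Longrightarrow> cgirth x \<le> cprog_girth P"
  unfolding cprog_girth_def by (intro Max_ge) auto

lemma sq2: "(2 * (a::nat)) * (2 * a) = 4 * (a * a)" by simp

lemma cube9: "9 * ((a::nat) * a) * a = 9 * a ^ 3" by (simp add: power3_eq_cube)

lemma expo_le:
  fixes p g D :: nat
  shows "((p + 2) * (g + 2) + 5) * (D + 1) \<le> 9 * (p + g + D + 1) ^ 3"
proof -
  let ?x = "p + g + D + 1"
  have x1: "1 \<le> ?x" by simp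
  define y where "y = ?x * ?x"
  have a: "(p + 2) * (g + 2) \<le> (2 * ?x) * (2 * ?x)" by (intro mult_le_mono) simp_all
  have a': "(2 * ?x) * (2 * ?x) = 4 * y" unfolding y_def by (rule sq2)
  have b: "5 * 1 \<le> 5 * y" unfolding y_def using x1 by (intro mult_le_mono2) simp
  have "(p + 2) * (g + 2) + 5 \<le> 9 * y" using a b unfolding a' by linarith
  then have "(p + 2) * (g + 2) + 5 \<le> 9 * (?x * ?x)" unfolding y_def .
  then have "((p + 2) * (g + 2) + 5) * (D + 1) \<le> (9 * (?x * ?x)) * ?x"
    by (intro mult_le_mono) simp_all
  also have "\<dots> = 9 * ?x ^ 3" by (rule cube9)
  finally show ?thesis .
qed

theorem proposition4p4:
  "\<exists>c k :: nat. \<forall>P :: ('a :: finite) cform list. cwf P \<longrightarrow>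
     (\<exists>Q :: 'a tform list. twf Q \<and> tlang Q = clang P \<and>
        tprog_size Q \<le> c * cprog_size P *
          2 ^ (c * (cprog_prec P + cprog_girth P + cprog_depth P + 1) ^ k))"
proof (rule exI[of _ 9], rule exI[of _ 3], intro allI impI)
  fix P :: "'a cform list"
  assume wf: "cwf P"
  let ?p = "cprog_prec P"
  let ?g = "cprog_girth P"
  let ?D = "cprog_depth P"
  let ?Z = "zz ?p ?g"
  have each: "tsize (tr x) \<le> csize x * ?Z ^ (?D + 1)" if "x \<in> set P" for x
  proof -
    have "tsize (tr x) \<le> csize x * ?Z ^ (cdepth (\<lambda>_. 0) x + 1)"
      using prec_le[OF that] girth_le[OF that] by (rule size_all(1))
    also have "\<dots> \<le> csize x * ?Z ^ (?D + 1)"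
      using depth_le[OF that] by (intro mult_le_mono2 zz_mono) simp
    finally show ?thesis .
  qed
  have "tprog_size (map tr P) = (\<Sum>x\<leftarrow>P. tsize (tr x))"
    unfolding tprog_size_def by (simp add: comp_def)
  also have "\<dots> \<le> (\<Sum>x\<leftarrow>P. csize x * ?Z ^ (?D + 1))"
    using each by (rule sum_list_mono)
  also have "\<dots> = cprog_size P * ?Z ^ (?D + 1)"
    unfolding cprog_size_def by (rule sum_list_mult_const)
  also have "?Z ^ (?D + 1) = 2 ^ (((?p + 2) * (?g + 2) + 5) * (?D + 1))"
    unfolding zz_def by (rule power_mult[symmetric])
  also have "(2::nat) ^ (((?p + 2) * (?g + 2) + 5) * (?D + 1)) \<le> 2 ^ (9 * (?p + ?g + ?D + 1) ^ 3)"
    by (intro power_increasing expo_le) simp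
  finally have "tprog_size (map tr P) \<le> cprog_size P * 2 ^ (9 * (?p + ?g + ?D + 1) ^ 3)"
    by simp
  also have "\<dots> \<le> 9 * cprog_size P * 2 ^ (9 * (?p + ?g + ?D + 1) ^ 3)" by simp
  finally have sz: "tprog_size (map tr P) \<le> 9 * cprog_size P * 2 ^ (9 * (?p + ?g + ?D + 1) ^ 3)" .
  show "\<exists>Q :: 'a tform list. twf Q \<and> tlang Q = clang P \<and>
        tprog_size Q \<le> 9 * cprog_size P * 2 ^ (9 * (?p + ?g + ?D + 1) ^ 3)"
    using twf_tr[OF wf] tlang_tr sz by blast
qed

end
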